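(* For $\varepsilon>0$ let $q_\varepsilon=\frac1\varepsilon\delta(t-\frac12-2\varepsilon)$. For every $n_0\in\mathbb N$ there exists $\varepsilon_0>0$ such that $$G^a_{4n-2}(q_\varepsilon)=G^0_{4n-2}(q_\varepsilon)\ne\emptyset\quad\text{for all }(a,\varepsilon,n)\in\mathbb R\times(0,\varepsilon_0)\times\{1,\dots,n_0\}.$$
   Context: Fix an integer $N\ge1$. The potential $q_\varepsilon$ is a $\delta$-interaction of strength $1/\varepsilon$ at $t_0=\frac12+2\varepsilon\in(0,1)$. That is, $-y''+q_\varepsilon y=\lambda y$ means $-y''=\lambda y$ on $[0,1]\setminus\{t_0\}$, with $y$ continuous at $t_0$ and $y'(t_0+)-y'(t_0-)=\frac1\varepsilon y(t_0)$. Hill-equation data. For $\lambda\in\mathbb C$, let $\vartheta,\varphi$ solve this equation with $\vartheta(0)=\varphi'(0)=1$ and $\vartheta'(0)=\varphi(0)=0$. Put $F=(\varphi'(1,\cdot)+\vartheta(1,\cdot))/2$ and $F_-=(\varphi'(1,\cdot)-\vartheta(1,\cdot))/2$. Operators. Let $a=a_1'+a_2'$ with $a_1',a_2'\in\mathbb R$, let $s=e^{2\pi i/N}$, and for $k\in\mathbb Z_N$ set $c_k=\cos(\pi k/N+a)$ and $s_k=\sin(\pi k/N+a)$. $H_k^a$ acts in $L^2(\Gamma^1)$, where $\Gamma^1$ has edges $\Gamma_{n,j}$, $(n,j)\in\mathbb Z\times\{1,\dots,6\}$, each identified with $[0,1]$, by $-f''_{n,j}+q_\varepsilon f_{n,j}$,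 with boundary conditions for all $n$: - $e^{ia_1'}f_{n,1}(1)=f_{n,2}(0)=f_{n,5}(0)$; - $e^{ia_2'}f_{n,2}(1)=f_{n,3}(0)=f_{n,6}(0)$; - $e^{ia_1'}f_{n,3}(1)=f_{n,4}(0)=e^{ia_1'}f_{n-1,6}(1)$; - $e^{ia_2'}s^kf_{n,4}(1)=f_{n,1}(0)=e^{-ia_1'}f_{n-1,5}(1)$; - $e^{ia_1'}f'_{n,1}(1)=f'_{n,2}(0)+f'_{n,5}(0)$; - $e^{ia_2'}f'_{n,2}(1)=f'_{n,3}(0)+f'_{n,6}(0)$; - $e^{ia_1'}f'_{n,3}(1)+e^{ia_1'}f'_{n-1,6}(1)=f'_{n,4}(0)$; - $e^{ia_2'}s^kf'_{n,4}(1)+e^{-ia_1'}f'_{n-1,5}(1)=f'_{n,1}(0)$. $H^a=\bigoplus_kH_k^a$. Lyapunov functions. $F_{k,\nu}=\xi_k-(-1)^\nu\sqrt{\rho_k}$, with $\xi_k=\frac{9F^2-F_-^2-1}2-s_k^2$ and $\rho_k=(9F^2-s_k^2)c_k^2+s_k^2F_-^2$. Set $D_k^\pm=4(F_{k,1}\mp1)(F_{k,2}\mp1)$. Antiperiodic eigenvalues. The zeros of $D_0^-$ at $a=0$ are labeled $\lambda^{0,-}_{2,1}\le\lambda^{0,-}_{1,1}\le\lambda^{0,+}_{1,1}\le\lambda^{0,+}_{2,1}\le\lambda^{0,-}_{2,3}\le\cdots$. Set $\varkappa_n=(\lambda^{0,-}_{1,2n-1},\lambda^{0,+}_{1,2n-1})$.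 Let $r^\mp_{k,n}$ be the smallest/largest zero of $\rho_k$ in $\overline{\varkappa_n}$, and $v_k=|F_-|-c_k^2$. Gaps. $E^{k,\pm}_{1,2n-1}=\lambda^{0,\pm}_{1,2n-1}$ if $v_k(\lambda^{0,\pm}_{1,2n-1})\ge0$, and $E^{k,\pm}_{1,2n-1}=r^\pm_{k,n}$ otherwise. Define $G^a_{4n-2}=\bigcap_{k\in\mathbb Z_N}(E^{k,-}_{1,2n-1},E^{k,+}_{1,2n-1})$, the gaps of $\sigma_{ac}(H^a)$ inside $\varkappa_n$. The notation $G^a_{4n-2}(q_\varepsilon)$ indicates the potential used. *)

theory Defs
  imports "HOL-Analysis.Analysis"
begin

text \<open>cosine-type and sine-type solutions c(lambda,t), s(lambda,t) of -y''=lambda y with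
  c(0)=1, c'(0)=0, s(0)=0, s'(0)=1; c' = -lambda s and s' = c.\<close>

definition cfun :: "real \<Rightarrow> real \<Rightarrow> real" where
  "cfun lam t = (if lam \<ge> 0 then cos (sqrt lam * t) else cosh (sqrt (- lam) * t))"

definition sfun :: "real \<Rightarrow> real \<Rightarrow> real" where
  "sfun lam t = (if lam = 0 then t
     else if lam > 0 then sin (sqrt lam * t) / sqrt lam
     else sinh (sqrt (- lam) * t) / sqrt (- lam))"

definition t0 :: "real \<Rightarrow> real" where
  "t0 eps = 1/2 + 2 * eps"

text \<open>Transfer matrix over [0,1]: M(1-t0) * J * M(t0), where M(t) = [[c,s],[-lambda s, c]]
  acts on (y,y') and J = [[1,0],[1/eps,1]] is the jump y'(t0+) - y'(t0-) = (1/eps) y(t0).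
  theta1 = vartheta(1,lambda) is its (1,1) entry, dphi1 = varphi'(1,lambda) its (2,2) entry.\<close>

definition theta1 :: "real \<Rightarrow> real \<Rightarrow> real" where
  "theta1 eps lam =
     (let c1 = cfun lam (t0 eps); s1 = sfun lam (t0 eps);
          c2 = cfun lam (1 - t0 eps); s2 = sfun lam (1 - t0 eps)
      in c2 * c1 + s2 * ((1/eps) * c1 - lam * s1))"

definition dphi1 :: "real \<Rightarrow> real \<Rightarrow> real" where
  "dphi1 eps lam =
     (let c1 = cfun lam (t0 eps); s1 = sfun lam (t0 eps);
          c2 = cfun lam (1 - t0 eps); s2 = sfun lam (1 - t0 eps)
      in - lam * s2 * s1 + c2 * ((1/eps) * s1 + c1))"

definition Fp :: "real \<Rightarrow> real \<Rightarrow> real" where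
  "Fp eps lam = (dphi1 eps lam + theta1 eps lam) / 2"

definition Fm :: "real \<Rightarrow> real \<Rightarrow> real" where
  "Fm eps lam = (dphi1 eps lam - theta1 eps lam) / 2"

definition ck :: "nat \<Rightarrow> real \<Rightarrow> nat \<Rightarrow> real" where
  "ck N a k = cos (pi * real k / real N + a)"

definition sk :: "nat \<Rightarrow> real \<Rightarrow> nat \<Rightarrow> real" where
  "sk N a k = sin (pi * real k / real N + a)"

definition xi :: "nat \<Rightarrow> real \<Rightarrow> real \<Rightarrow> nat \<Rightarrow> real \<Rightarrow> real" where
  "xi N a eps k lam = (9 * (Fp eps lam)^2 - (Fm eps lam)^2 - 1) / 2 - (sk N a k)^2"

definition rho :: "nat \<Rightarrow> real \<Rightarrow> real \<Rightarrow> nat \<Rightarrow> real \<Rightarrow> real" where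
  "rho N a eps k lam = (9 * (Fp eps lam)^2 - (sk N a k)^2) * (ck N a k)^2
                     + (sk N a k)^2 * (Fm eps lam)^2"

text \<open>D_k^- = 4 (F_{k,1}+1)(F_{k,2}+1) with F_{k,nu} = xi_k - (-1)^nu sqrt rho_k;
  the product is written out: (xi+1+sqrt rho)(xi+1-sqrt rho) = (xi+1)^2 - rho.\<close>

definition Dminus :: "nat \<Rightarrow> real \<Rightarrow> real \<Rightarrow> nat \<Rightarrow> real \<Rightarrow> real" where
  "Dminus N a eps k lam = 4 * ((xi N a eps k lam + 1)^2 - rho N a eps k lam)"

definition vk :: "nat \<Rightarrow> real \<Rightarrow> real \<Rightarrow> nat \<Rightarrow> real \<Rightarrow> real" where
  "vk N a eps k lam = \<bar>Fm eps lam\<bar> - (ck N a k)^2"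

definition zero_mult :: "(real \<Rightarrow> real) \<Rightarrow> real \<Rightarrow> nat" where
  "zero_mult f x = (LEAST m. (deriv ^^ m) f x \<noteq> 0)"

definition zero_count :: "(real \<Rightarrow> real) \<Rightarrow> real \<Rightarrow> nat" where
  "zero_count f x = (\<Sum>y\<in>{y. y \<le> x \<and> f y = 0}. zero_mult f y)"

text \<open>The j-th (j \<ge> 1) zero of f in increasing order, counted with multiplicity.\<close>
definition kth_zero :: "(real \<Rightarrow> real) \<Rightarrow> nat \<Rightarrow> real" where
  "kth_zero f j = Inf {x. zero_count f x \<ge> j}"

definition lam_minus :: "nat \<Rightarrow> real \<Rightarrow> nat \<Rightarrow> real" where
  "lam_minus N eps n = kth_zero (Dminus N 0 eps 0) (4 * n - 2)"

definition lam_plus :: "nat \<Rightarrow> real \<Rightarrow> nat \<Rightarrow> real" where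
  "lam_plus N eps n = kth_zero (Dminus N 0 eps 0) (4 * n - 1)"

definition r_minus :: "nat \<Rightarrow> real \<Rightarrow> real \<Rightarrow> nat \<Rightarrow> nat \<Rightarrow> real" where
  "r_minus N a eps k n =
     Inf {x. lam_minus N eps n \<le> x \<and> x \<le> lam_plus N eps n \<and> rho N a eps k x = 0}"

definition r_plus :: "nat \<Rightarrow> real \<Rightarrow> real \<Rightarrow> nat \<Rightarrow> nat \<Rightarrow> real" where
  "r_plus N a eps k n =
     Sup {x. lam_minus N eps n \<le> x \<and> x \<le> lam_plus N eps n \<and> rho N a eps k x = 0}"

definition E_minus :: "nat \<Rightarrow> real \<Rightarrow> real \<Rightarrow> nat \<Rightarrow> nat \<Rightarrow> real" where
  "E_minus N a eps k n =
     (if vk N a eps k (lam_minus N eps n) \<ge> 0 then lam_minus N eps n else r_minus N a eps k n)"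

definition E_plus :: "nat \<Rightarrow> real \<Rightarrow> real \<Rightarrow> nat \<Rightarrow> nat \<Rightarrow> real" where
  "E_plus N a eps k n =
     (if vk N a eps k (lam_plus N eps n) \<ge> 0 then lam_plus N eps n else r_plus N a eps k n)"

definition gap :: "nat \<Rightarrow> real \<Rightarrow> real \<Rightarrow> nat \<Rightarrow> real set" where
  "gap N a eps n = (\<Inter>k\<in>{0..<N}. {E_minus N a eps k n <..< E_plus N a eps k n})"

end

theory Submission
  imports Defs
begin


lemma Fpm_pos:
  assumes "0 < lam" "eps \<noteq> 0"
  shows "Fp eps lam = cos (sqrt lam) + sin (sqrt lam) / (2 * eps * sqrt lam)"
    and "Fm eps lam = sin (4 * eps * sqrt lam) / (2 * eps * sqrt lam)"
proof -
  define m where "m = sqrt lam"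
  have m: "m > 0" "lam = m^2" using assms by (auto simp: m_def)
  define al where "al = m * t0 eps"
  define be where "be = m * (1 - t0 eps)"
  have ab: "al + be = m" "al - be = 4 * eps * m" by (auto simp: al_def be_def t0_def algebra_simps)
  have cf: "cfun lam (t0 eps) = cos al" "cfun lam (1 - t0 eps) = cos be"
    "sfun lam (t0 eps) = sin al / m" "sfun lam (1 - t0 eps) = sin be / m"
    using assms unfolding cfun_def sfun_def al_def be_def m_def by auto
  have th: "theta1 eps lam = cos be * cos al - sin be * sin al + sin be * cos al / (eps * m)"
    unfolding theta1_def Let_def cf using m assms 
    by (simp add: field_simps power2_eq_square)
  have dp: "dphi1 eps lam = cos be * cos al - sin be * sin al + cos be * sin al / (eps * m)"
    unfolding dphi1_def Let_def cf using m assms 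
    by (simp add: field_simps power2_eq_square)
  have c: "cos m = cos be * cos al - sin be * sin al"
    using cos_add[of be al] ab by (simp add: add.commute)
  have s1: "sin m = sin be * cos al + cos be * sin al"
    using sin_add[of be al] ab by (simp add: add.commute algebra_simps)
  have s2: "sin (4 * eps * m) = sin al * cos be - cos al * sin be"
    using sin_diff[of al be] ab by simp
  show "Fp eps lam = cos (sqrt lam) + sin (sqrt lam) / (2 * eps * sqrt lam)"
    unfolding Fp_def th dp m_def[symmetric] c s1 using m assms by (simp add: field_simps)
  show "Fm eps lam = sin (4 * eps * sqrt lam) / (2 * eps * sqrt lam)"
    unfolding Fm_def th dp m_def[symmetric] s2 using m assms by (simp add: field_simps)
qed

lemma Fpm_neg:
  assumes "lam < 0" "eps \<noteq> 0"
  shows "Fp eps lam = cosh (sqrt (-lam)) + sinh (sqrt (-lam)) / (2 * eps * sqrt (-lam))"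
    and "Fm eps lam = sinh (4 * eps * sqrt (-lam)) / (2 * eps * sqrt (-lam))"
proof -
  define m where "m = sqrt (-lam)"
  have m: "m > 0" "lam = -(m^2)" using assms by (auto simp: m_def)
  define al where "al = m * t0 eps"
  define be where "be = m * (1 - t0 eps)"
  have ab: "al + be = m" "al - be = 4 * eps * m" by (auto simp: al_def be_def t0_def algebra_simps)
  have cf: "cfun lam (t0 eps) = cosh al" "cfun lam (1 - t0 eps) = cosh be"
    "sfun lam (t0 eps) = sinh al / m" "sfun lam (1 - t0 eps) = sinh be / m"
    using assms unfolding cfun_def sfun_def al_def be_def m_def by auto
  have th: "theta1 eps lam = cosh be * cosh al + sinh be * sinh al + sinh be * cosh al / (eps * m)"
    unfolding theta1_def Let_def cf using m assms 
    by (simp add: field_simps power2_eq_square)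
  have dp: "dphi1 eps lam = cosh be * cosh al + sinh be * sinh al + cosh be * sinh al / (eps * m)"
    unfolding dphi1_def Let_def cf using m assms 
    by (simp add: field_simps power2_eq_square)
  have c: "cosh m = cosh be * cosh al + sinh be * sinh al"
    using cosh_add[of be al] ab by (simp add: add.commute)
  have s1: "sinh m = sinh be * cosh al + cosh be * sinh al"
    using sinh_add[of be al] ab by (simp add: add.commute algebra_simps)
  have s2: "sinh (4 * eps * m) = sinh al * cosh be - cosh al * sinh be"
    using sinh_add[of al "-be"] ab by simp
  show "Fp eps lam = cosh (sqrt (-lam)) + sinh (sqrt (-lam)) / (2 * eps * sqrt (-lam))"
    unfolding Fp_def th dp m_def[symmetric] c s1 using m assms by (simp add: field_simps)
  show "Fm eps lam = sinh (4 * eps * sqrt (-lam)) / (2 * eps * sqrt (-lam))"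
    unfolding Fm_def th dp m_def[symmetric] s2 using m assms by (simp add: field_simps)
qed

lemma Fpm_zero:
  assumes "eps \<noteq> 0"
  shows "Fp eps 0 = 1 + 1 / (2 * eps)" and "Fm eps 0 = 2"
  using assms unfolding Fp_def Fm_def theta1_def dphi1_def cfun_def sfun_def t0_def Let_def
  by (simp_all add: field_simps)

lemma Dminus_prod:
  "Dminus N 0 eps 0 lam = (3 * Fp eps lam - 1 - Fm eps lam) * (3 * Fp eps lam - 1 + Fm eps lam)
     * (3 * Fp eps lam + 1 - Fm eps lam) * (3 * Fp eps lam + 1 + Fm eps lam)"
proof -
  have "\<And>F G::real. 4 * (((9 * F^2 - G^2 - 1) / 2 - 0 + 1)^2 - ((9 * F^2 - 0) * 1 + 0 * G^2))
     = (3 * F - 1 - G) * (3 * F - 1 + G) * (3 * F + 1 - G) * (3 * F + 1 + G)"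
    by (simp add: field_simps power2_eq_square)
  then show ?thesis unfolding Dminus_def xi_def rho_def ck_def sk_def by simp
qed



lemma sin_half_lt:
  fixes x :: real assumes "0 < x" "x \<le> 1" shows "x / 2 < sin x"
proof -
  have "(\<lambda>t. sin t - t/2) 0 < (\<lambda>t. sin t - t/2) x"
  proof (rule DERIV_pos_imp_increasing[OF assms(1)])
    fix t :: real assume t: "0 \<le> t" "t \<le> x"
    have "1 < pi/3" using pi_gt3 by simp
    then have "cos (pi/3) < cos t"
      using t assms pi_gt3 by (subst cos_mono_less_eq) auto
    then have "cos t > 1/2" by (simp add: cos_60)
    moreover have "DERIV (\<lambda>t. sin t - t/2) t :> cos t - 1/2"
      by (auto intro!: derivative_eq_intros)
    ultimately show "\<exists>y. DERIV (\<lambda>t. sin t - t/2) t :> y \<and> 0 < y" by force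
  qed
  then show ?thesis by simp
qed

lemma sin_npi_add: "sin (real m * pi + t) = (-1)^m * sin t"
  by (simp add: sin_add)

lemma cos_npi_add: "cos (real m * pi + t) = (-1)^m * cos t"
  by (simp add: cos_add)

lemma sin_ge_half:
  fixes t :: real assumes "pi/6 \<le> t" "t \<le> 5*pi/6" shows "1/2 \<le> sin t"
proof (cases "t \<le> pi/2")
  case True
  then have "sin (pi/6) \<le> sin t" using assms by (subst sin_mono_le_eq) auto
  then show ?thesis by (simp add: sin_30)
next
  case False
  have "sin (pi/6) \<le> sin (pi - t)" using assms False by (subst sin_mono_le_eq) auto
  then show ?thesis by (simp add: sin_30)
qed

lemma abs_sin_ge_half:
  fixes mu :: real
  assumes "pi/6 \<le> mu" "\<And>m::nat. m \<ge> 1 \<Longrightarrow> \<bar>mu - real m * pi\<bar> > pi/6"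
  shows "1/2 \<le> \<bar>sin mu\<bar>"
proof -
  define k where "k = nat \<lfloor>mu / pi\<rfloor>"
  have "0 < mu" using assms(1) pi_gt_zero by linarith
  then have mu0: "0 \<le> mu / pi" by simp
  have k1: "real k \<le> mu / pi" "mu / pi < real k + 1" unfolding k_def using mu0
    by linarith+
  define t where "t = mu - real k * pi"
  have t: "0 \<le> t" "t < pi" using k1 unfolding t_def by (auto simp: field_simps)
  have t1: "pi/6 \<le> t"
  proof (cases "k = 0")
    case True then show ?thesis using assms(1) by (simp add: t_def)
  next
    case False
    then have "\<bar>mu - real k * pi\<bar> > pi/6" using assms(2)[of k] by simp
    then show ?thesis unfolding t_def using t t_def by linarith
  qed
  have t2: "t \<le> 5*pi/6"
  proof -
    have "\<bar>mu - real (k+1) * pi\<bar> > pi/6" using assms(2)[of "k+1"] by simp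
    then show ?thesis unfolding t_def using t t_def by (simp add: algebra_simps)
  qed
  have "sin mu = (-1)^k * sin t" using sin_npi_add[of k t] by (simp add: t_def)
  then have "\<bar>sin mu\<bar> = \<bar>sin t\<bar>" by (simp add: abs_mult)
  then show ?thesis using sin_ge_half[OF t1 t2] by simp
qed

lemma cos_near_npi:
  fixes x :: real
  assumes "\<bar>x - real m * pi\<bar> \<le> pi/6"
  shows "(-1)^m * cos x \<ge> sqrt 3 / 2"
proof -
  define t where "t = x - real m * pi"
  have "cos x = (-1)^m * cos t" using cos_npi_add[of m t] by (simp add: t_def)
  then have e: "(-1)^m * cos x = cos \<bar>t\<bar>" by (simp flip: power_mult_distrib)
  have "\<bar>t\<bar> \<le> pi" "\<bar>t\<bar> \<le> pi/6" unfolding t_def using assms pi_gt_zero by linarith+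
  moreover have "cos (pi/6) \<le> cos \<bar>t\<bar>" using calculation by (subst cos_mono_le_eq) auto
  then show ?thesis using e by (simp add: cos_30)
qed


definition KK :: "real \<Rightarrow> real \<Rightarrow> real \<Rightarrow> real \<Rightarrow> real" where
  "KK eps a b x = 6 * eps * x * cos x + 3 * sin x + 2 * a * eps * x + b * sin (4 * eps * x)"

definition KKd :: "real \<Rightarrow> real \<Rightarrow> real \<Rightarrow> real \<Rightarrow> real" where
  "KKd eps a b x = 6 * eps * cos x - 6 * eps * x * sin x + 3 * cos x + 2 * a * eps
     + 4 * b * eps * cos (4 * eps * x)"

definition PP :: "real \<Rightarrow> real \<Rightarrow> real" where
  "PP eps x = 2 * eps * x * cos x + sin x"

lemma KK_deriv: "DERIV (KK eps a b) x :> KKd eps a b x"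
  unfolding KK_def KKd_def
  by (auto intro!: derivative_eq_intros simp: algebra_simps)

lemma abs4: "\<bar>u1::real\<bar> \<le> c1 \<Longrightarrow> \<bar>u2\<bar> \<le> c2 \<Longrightarrow> \<bar>u3\<bar> \<le> c3 \<Longrightarrow> \<bar>u4\<bar> \<le> c4
   \<Longrightarrow> \<bar>u1 + u2 + u3 + u4\<bar> \<le> c1 + c2 + c3 + c4"
  unfolding abs_le_iff by linarith

lemma pm1: "a \<in> {-1, 1::real} \<Longrightarrow> \<bar>a\<bar> = 1" by auto

lemma abs_cos_le: "\<bar>c * cos (x::real)\<bar> \<le> \<bar>c\<bar>"
  by (simp add: abs_mult mult_left_le)

lemma abs_sin_le: "\<bar>c * sin (x::real)\<bar> \<le> \<bar>c\<bar>"
  by (simp add: abs_mult mult_left_le)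

locale setting =
  fixes n0 :: nat and eps :: real
  assumes eps_pos: "0 < eps" and eps_small: "eps * (32 * (real n0 + 1)) < 1"
begin

definition Mr :: real where "Mr = real n0 * pi + pi/6"

lemma Mr_pos: "0 < Mr" unfolding Mr_def by (simp add: add_nonneg_pos)

lemma epsM: "eps * Mr * 8 < 1"
proof -
  have "real n0 * pi \<le> real n0 * 4" using pi_less_4 by (intro mult_left_mono) auto
  then have "Mr \<le> 4 * (real n0 + 1)" using pi_less_4 unfolding Mr_def by (simp add: algebra_simps)
  then have "eps * Mr * 8 \<le> eps * (32 * (real n0 + 1))" using eps_pos by simp
  then show ?thesis using eps_small by linarith
qed

lemma eps_lt: "eps < 1/32"
proof -
  have "eps * 32 \<le> eps * (32 * (real n0 + 1))" using eps_pos by (intro mult_left_mono) auto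
  then show ?thesis using eps_small by linarith
qed

lemma R_bound:
  assumes "a \<in> {-1,1}" "b \<in> {-1,1}" "0 \<le> x"
  shows "\<bar>KK eps a b x - 3 * sin x\<bar> \<le> 12 * eps * x"
proof -
  have "KK eps a b x - 3 * sin x = (6 * eps * x) * cos x + 0 + 2 * a * eps * x + b * sin (4 * eps * x)"
    unfolding KK_def by simp
  also have "\<bar>\<dots>\<bar> \<le> 6 * eps * x + 0 + 2 * eps * x + 4 * eps * x"
  proof (rule abs4)
    show "\<bar>6 * eps * x * cos x\<bar> \<le> 6 * eps * x" using abs_cos_le[of "6 * eps * x" x] eps_pos assms by simp
    show "\<bar>2 * a * eps * x\<bar> \<le> 2 * eps * x" using pm1[OF assms(1)] eps_pos assms by (simp add: abs_mult)
    show "\<bar>b * sin (4 * eps * x)\<bar> \<le> 4 * eps * x" using pm1[OF assms(2)] eps_pos assms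
      abs_sin_x_le_abs_x[of "4 * eps * x"] by (simp add: abs_mult)
  qed simp
  finally show ?thesis by simp
qed

lemma Q_big:
  assumes "0 < x" "x \<le> Mr"
  shows "2 * eps * x < sin (4 * eps * x)"
proof -
  have "eps * x \<le> eps * Mr" using assms eps_pos by (intro mult_left_mono) auto
  then have "4 * eps * x \<le> 1" using epsM by linarith
  moreover have "0 < 4 * eps * x" using assms eps_pos by simp
  ultimately show ?thesis using sin_half_lt[of "4 * eps * x"] by simp
qed

lemma KK_nz:
  assumes "a \<in> {-1,1}" "b \<in> {-1,1}" "0 < x" "x \<le> Mr"
    and far: "\<And>m. m \<in> {1..n0} \<Longrightarrow> \<bar>x - real m * pi\<bar> > pi/6"
  shows "KK eps a b x \<noteq> 0"
proof -
  have R: "\<bar>KK eps a b x - 3 * sin x\<bar> \<le> 12 * eps * x" using R_bound assms by simp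
  show ?thesis
  proof (cases "x < pi/6")
    case True
    have "x \<le> 1" using True pi_less_4 by linarith
    then have "x/2 < sin x" using sin_half_lt assms by simp
    moreover have "12 * eps * x < 3 * x / 2" using eps_lt assms by simp
    ultimately show ?thesis using R by linarith
  next
    case False
    have "1/2 \<le> \<bar>sin x\<bar>"
    proof (rule abs_sin_ge_half)
      show "pi/6 \<le> x" using False by simp
      fix m :: nat assume m: "1 \<le> m"
      show "pi/6 < \<bar>x - real m * pi\<bar>"
      proof (cases "m \<le> n0")
        case True then show ?thesis using far m by simp
      next
        case False
        then have "real n0 + 1 \<le> real m" by simp
        then have "(real n0 + 1) * pi \<le> real m * pi" by (simp add: mult_right_mono)
        then have "real n0 * pi + pi \<le> real m * pi" by (simp add: algebra_simps)
        then have "x - real m * pi < -(pi/6)" using assms(4) pi_gt_zero Mr_def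
          by linarith
        then show ?thesis by linarith
      qed
    qed
    moreover have "eps * x \<le> eps * Mr" using assms eps_pos by (intro mult_left_mono) auto
    then have "12 * eps * x < 3/2" using epsM by linarith
    ultimately show ?thesis using R by linarith
  qed
qed


lemma sgn_sq: "(-1::real)^m * (-1)^m = 1"
proof -
  have "(-1::real)^m * (-1)^m = ((-1) * (-1))^m" by (rule power_mult_distrib[symmetric])
  then show ?thesis by simp
qed

lemma abs_sgn_mult: "\<bar>(-1::real)^m * y\<bar> = \<bar>y\<bar>"
  by (simp add: abs_mult)

lemma KK_ends:
  assumes "a \<in> {-1,1}" "b \<in> {-1,1}" "m \<in> {1..n0}"
  shows "(-1)^m * KK eps a b (real m * pi - pi/6) < 0"
    and "(-1)^m * KK eps a b (real m * pi + pi/6) > 0"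
proof -
  have m1: "1 \<le> real m" "real m \<le> real n0" using assms(3) by auto
  have mpi: "pi \<le> real m * pi" "real m * pi \<le> real n0 * pi" using mult_right_mono[OF m1(1) pi_ge_zero] mult_right_mono[OF m1(2) pi_ge_zero] by simp_all
  define xl where "xl = real m * pi - pi/6"
  define xr where "xr = real m * pi + pi/6"
  have xl: "0 \<le> xl" "xl \<le> Mr" using mpi pi_gt_zero unfolding xl_def Mr_def by linarith+
  have xr: "0 \<le> xr" "xr \<le> Mr" using mpi pi_gt_zero unfolding xr_def Mr_def by linarith+
  have sl: "sin xl = (-1)^m * (-1/2)" using sin_npi_add[of m "-(pi/6)"] unfolding xl_def
    by (simp add: sin_30)
  have sr: "sin xr = (-1)^m * (1/2)" using sin_npi_add[of m "pi/6"] unfolding xr_def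
    by (simp add: sin_30)
  have Rl: "\<bar>(-1)^m * (KK eps a b xl - 3 * sin xl)\<bar> \<le> 12 * eps * xl"
    using R_bound[OF assms(1,2) xl(1)] abs_sgn_mult by simp
  have Rr: "\<bar>(-1)^m * (KK eps a b xr - 3 * sin xr)\<bar> \<le> 12 * eps * xr"
    using R_bound[OF assms(1,2) xr(1)] abs_sgn_mult by simp
  have "eps * xl \<le> eps * Mr" "eps * xr \<le> eps * Mr" using xl xr eps_pos by (auto intro: mult_left_mono)
  then have b: "12 * eps * xl < 3/2" "12 * eps * xr < 3/2" using epsM by linarith+
  have el: "(-1)^m * KK eps a b xl = -3/2 + (-1)^m * (KK eps a b xl - 3 * sin xl)"
    unfolding sl by (simp add: algebra_simps sgn_sq)
  have er: "(-1)^m * KK eps a b xr = 3/2 + (-1)^m * (KK eps a b xr - 3 * sin xr)"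
    unfolding sr by (simp add: algebra_simps sgn_sq)
  show "(-1)^m * KK eps a b (real m * pi - pi/6) < 0"
    using el Rl b unfolding xl_def[symmetric] by linarith
  show "(-1)^m * KK eps a b (real m * pi + pi/6) > 0"
    using er Rr b unfolding xr_def[symmetric] by linarith
qed

lemma sqrt3: "5/3 < sqrt (3::real)"
  by (rule real_less_rsqrt) (simp add: power2_eq_square)

lemma KKd_pos:
  assumes "a \<in> {-1,1}" "b \<in> {-1,1}" "0 \<le> t" "t \<le> Mr" "\<bar>t - real m * pi\<bar> \<le> pi/6"
  shows "(-1)^m * KKd eps a b t > 0"
proof -
  have eq: "KKd eps a b t - 3 * cos t = (6 * eps) * cos t + (-(6 * eps * t)) * sin t + 2 * a * eps
      + (4 * b * eps) * cos (4 * eps * t)"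
    by (simp add: KKd_def algebra_simps)
  have "\<bar>KKd eps a b t - 3 * cos t\<bar> \<le> 6 * eps + 6 * eps * t + 2 * eps + 4 * eps"
    unfolding eq
  proof (rule abs4)
    show "\<bar>6 * eps * cos t\<bar> \<le> 6 * eps" using abs_cos_le[of "6 * eps" t] eps_pos by simp
    show "\<bar>- (6 * eps * t) * sin t\<bar> \<le> 6 * eps * t" using abs_sin_le[of "- (6 * eps * t)" t] eps_pos assms by simp
    show "\<bar>2 * a * eps\<bar> \<le> 2 * eps" using pm1[OF assms(1)] eps_pos by (simp add: abs_mult)
    show "\<bar>4 * b * eps * cos (4 * eps * t)\<bar> \<le> 4 * eps"
      using abs_cos_le[of "4 * b * eps" "4 * eps * t"] pm1[OF assms(2)] eps_pos by (simp add: abs_mult)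
  qed
  then have R: "\<bar>(-1)^m * (KKd eps a b t - 3 * cos t)\<bar> \<le> 12 * eps + 6 * eps * t"
    using abs_sgn_mult by simp
  have c: "(-1)^m * cos t \<ge> sqrt 3 / 2" using cos_near_npi assms(5) by simp
  have "eps * t \<le> eps * Mr" using assms eps_pos by (auto intro: mult_left_mono)
  then have "12 * eps + 6 * eps * t < 2" using epsM eps_lt by linarith
  moreover have "(-1)^m * KKd eps a b t = 3 * ((-1)^m * cos t) + (-1)^m * (KKd eps a b t - 3 * cos t)"
    by (simp add: algebra_simps)
  ultimately show ?thesis using R c sqrt3 by linarith
qed

definition J :: "nat \<Rightarrow> real set" where
  "J m = {real m * pi - pi/6 .. real m * pi + pi/6}"

lemma J_sub:
  assumes "m \<in> {1..n0}" "t \<in> J m"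
  shows "0 < t" "t \<le> Mr" "\<bar>t - real m * pi\<bar> \<le> pi/6"
proof -
  have m1: "1 \<le> real m" "real m \<le> real n0" using assms(1) by auto
  have mpi: "pi \<le> real m * pi" "real m * pi \<le> real n0 * pi" using mult_right_mono[OF m1(1) pi_ge_zero] mult_right_mono[OF m1(2) pi_ge_zero] by simp_all
  have tt: "real m * pi - pi/6 \<le> t" "t \<le> real m * pi + pi/6" using assms(2) unfolding J_def by auto
  show "0 < t" "t \<le> Mr" "\<bar>t - real m * pi\<bar> \<le> pi/6"
    using tt mpi pi_gt_zero Mr_def unfolding abs_le_iff by linarith+
qed

lemma KK_mono:
  assumes "a \<in> {-1,1}" "b \<in> {-1,1}" "m \<in> {1..n0}" "x \<in> J m" "y \<in> J m" "x < y"
  shows "(-1)^m * KK eps a b x < (-1)^m * KK eps a b y"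
proof (rule DERIV_pos_imp_increasing[OF assms(6)])
  fix t assume t: "x \<le> t" "t \<le> y"
  then have "t \<in> J m" using assms(4,5) unfolding J_def by auto
  note tt = J_sub[OF assms(3) this]
  have "DERIV (\<lambda>t. (-1)^m * KK eps a b t) t :> (-1)^m * KKd eps a b t"
    using KK_deriv by (auto intro!: derivative_eq_intros)
  moreover have "(-1)^m * KKd eps a b t > 0" using KKd_pos[OF assms(1,2)] tt by simp
  ultimately show "\<exists>d. DERIV (\<lambda>t. (-1)^m * KK eps a b t) t :> d \<and> 0 < d" by blast
qed

lemma KK_cont: "continuous_on S (\<lambda>x. KK eps a b x)"
  unfolding KK_def by (intro continuous_intros)

definition zs :: "real \<Rightarrow> real \<Rightarrow> nat \<Rightarrow> real" where
  "zs a b m = (THE z. z \<in> J m \<and> KK eps a b z = 0)"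

lemma zs_prop:
  assumes "a \<in> {-1,1}" "b \<in> {-1,1}" "m \<in> {1..n0}"
  shows "zs a b m \<in> J m" "KK eps a b (zs a b m) = 0"
    "\<And>z. z \<in> J m \<Longrightarrow> KK eps a b z = 0 \<Longrightarrow> z = zs a b m"
    "\<And>u. u \<in> J m \<Longrightarrow> zs a b m \<le> u \<longleftrightarrow> 0 \<le> (-1)^m * KK eps a b u"
proof -
  define g where "g t = (-1)^m * KK eps a b t" for t
  have ends: "g (real m * pi - pi/6) \<le> 0" "0 \<le> g (real m * pi + pi/6)"
    using KK_ends[OF assms] unfolding g_def by (simp_all add: less_imp_le)
  have cg: "continuous_on {real m * pi - pi/6 .. real m * pi + pi/6} g"
    unfolding g_def by (intro continuous_on_mult continuous_on_const KK_cont)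
  have lr: "real m * pi - pi/6 \<le> real m * pi + pi/6" by simp
  have "\<exists>x. real m * pi - pi/6 \<le> x \<and> x \<le> real m * pi + pi/6 \<and> g x = 0"
    by (rule IVT'[OF ends lr cg])
  then obtain z where z: "real m * pi - pi/6 \<le> z" "z \<le> real m * pi + pi/6" "g z = 0"
    by blast
  have zJ: "z \<in> J m" using z unfolding J_def by auto
  have zK: "KK eps a b z = 0" using z(3) unfolding g_def by simp
  have mono: "\<And>x y. x \<in> J m \<Longrightarrow> y \<in> J m \<Longrightarrow> x < y \<Longrightarrow> g x < g y"
    unfolding g_def using KK_mono[OF assms] by blast
  have uniq: "\<And>y. y \<in> J m \<Longrightarrow> KK eps a b y = 0 \<Longrightarrow> y = z"
  proof -
    fix y assume y: "y \<in> J m" "KK eps a b y = 0"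
    then have gy: "g y = 0" unfolding g_def by simp
    show "y = z"
    proof (rule ccontr)
      assume yz: "y \<noteq> z"
      show False
      proof (cases "y < z")
        case True
        then have "g y < g z" by (rule mono[OF y(1) zJ])
        then show False using gy z(3) by simp
      next
        case False
        then have "z < y" using yz by linarith
        then have "g z < g y" by (rule mono[OF zJ y(1)])
        then show False using gy z(3) by simp
      qed
    qed
  qed
  have zs_eq: "zs a b m = z"
    unfolding zs_def
  proof (rule the_equality)
    show "z \<in> J m \<and> KK eps a b z = 0" using zJ zK by simp
    show "\<And>y. y \<in> J m \<and> KK eps a b y = 0 \<Longrightarrow> y = z" using uniq by blast
  qed
  show "zs a b m \<in> J m" "KK eps a b (zs a b m) = 0" using zs_eq zJ zK by auto
  show "\<And>y. y \<in> J m \<Longrightarrow> KK eps a b y = 0 \<Longrightarrow> y = zs a b m" using uniq zs_eq by auto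
  show "zs a b m \<le> u \<longleftrightarrow> 0 \<le> (-1)^m * KK eps a b u" if u: "u \<in> J m" for u
  proof -
    have "zs a b m \<le> u \<longleftrightarrow> 0 \<le> g u"
    proof
      assume zu: "zs a b m \<le> u"
      show "0 \<le> g u"
      proof (cases "z = u")
        case True then show ?thesis using z(3) by simp
      next
        case False
        then have "z < u" using zu zs_eq by simp
        then have "g z < g u" by (rule mono[OF zJ u])
        then show ?thesis using z(3) by simp
      qed
    next
      assume gu: "0 \<le> g u"
      show "zs a b m \<le> u"
      proof (rule ccontr)
        assume "\<not> zs a b m \<le> u"
        then have "u < z" using zs_eq by simp
        then have "g u < g z" by (rule mono[OF u zJ])
        then show False using z(3) gu by simp
      qed
    qed
    then show ?thesis unfolding g_def .
  qed
qed

lemma KK_zero_iff: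
  assumes "a \<in> {-1,1}" "b \<in> {-1,1}" "0 < x" "x \<le> Mr"
  shows "KK eps a b x = 0 \<longleftrightarrow> (\<exists>m\<in>{1..n0}. x = zs a b m)"
proof
  assume K: "KK eps a b x = 0"
  then obtain m where m: "m \<in> {1..n0}" "\<bar>x - real m * pi\<bar> \<le> pi/6"
    using KK_nz[OF assms] by force
  then have "x \<in> J m" unfolding J_def abs_le_iff by simp
  then show "\<exists>m\<in>{1..n0}. x = zs a b m" using zs_prop(3)[OF assms(1,2) m(1) _ K] m(1) by blast
next
  assume "\<exists>m\<in>{1..n0}. x = zs a b m"
  then show "KK eps a b x = 0" using zs_prop(2)[OF assms(1,2)] by blast
qed

end


definition II :: "(real \<times> real) set" where
  "II = {(-1,-1),(-1,1),(1,-1),(1,1)}"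

lemma II_pm: "p \<in> II \<Longrightarrow> fst p \<in> {-1,1} \<and> snd p \<in> {-1,1}"
  unfolding II_def by auto

lemma finite_II: "finite II" unfolding II_def by simp

lemma card_II: "card II = 4" unfolding II_def by simp

definition fac :: "real \<Rightarrow> real \<times> real \<Rightarrow> real \<Rightarrow> real" where
  "fac eps p lam = 3 * Fp eps lam + fst p + snd p * Fm eps lam"

lemma f_prod: "Dminus N 0 eps 0 lam = (\<Prod>p\<in>II. fac eps p lam)"
  unfolding Dminus_prod II_def fac_def by (simp add: algebra_simps)

lemma f_zero_iff: "Dminus N 0 eps 0 lam = 0 \<longleftrightarrow> (\<exists>p\<in>II. fac eps p lam = 0)"
  unfolding f_prod using finite_II by simp

lemma fac_pos_lam:
  assumes "0 < lam" "eps \<noteq> 0"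
  shows "fac eps p lam = KK eps (fst p) (snd p) (sqrt lam) / (2 * eps * sqrt lam)"
  unfolding fac_def Fpm_pos[OF assms] KK_def using assms by (simp add: field_simps)

context setting
begin

lemma fac_nonpos:
  assumes "lam \<le> 0" "p \<in> II"
  shows "fac eps p lam > 0"
proof -
  have ab: "fst p \<ge> -1" "snd p \<in> {-1,1}" using II_pm[OF assms(2)] by auto
  show ?thesis
  proof (cases "lam = 0")
    case True
    then have "fac eps p lam = 3 + 3 / (2 * eps) + fst p + snd p * 2"
      unfolding fac_def using Fpm_zero[of eps] eps_pos by simp
    moreover have "0 < 3 / (2 * eps)" using eps_pos by simp
    moreover have "snd p * 2 \<ge> -2" using ab by auto
    ultimately show ?thesis using ab by linarith
  next
    case False
    then have l: "lam < 0" using assms by simp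
    define r where "r = sqrt (-lam)"
    have r: "0 < r" using l by (simp add: r_def)
    have e: "eps \<noteq> 0" using eps_pos by simp
    have Fp: "Fp eps lam = cosh r + sinh r / (2 * eps * r)" and Fm: "Fm eps lam = sinh (4 * eps * r) / (2 * eps * r)"
      using Fpm_neg[OF l e] by (simp_all add: r_def)
    have s1: "0 < sinh (4 * eps * r)" using r eps_pos by simp
    have "4 * eps * r \<le> r" using r eps_lt by simp
    then have s2: "sinh (4 * eps * r) \<le> sinh r" by simp
    have d: "0 < 2 * eps * r" using r eps_pos by simp
    have h1: "fac eps p lam \<ge> 3 * Fp eps lam - 1 - Fm eps lam"
    proof -
      have "Fm eps lam > 0" unfolding Fm using s1 d by simp
      then have "snd p * Fm eps lam \<ge> - Fm eps lam" using ab by auto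
      then show ?thesis unfolding fac_def using ab by linarith
    qed
    have h2: "3 * Fp eps lam - 1 - Fm eps lam = 3 * cosh r - 1 + (3 * sinh r - sinh (4 * eps * r)) / (2 * eps * r)"
      unfolding Fp Fm by (simp add: diff_divide_distrib)
    have h3: "3 * cosh r - 1 + (3 * sinh r - sinh (4 * eps * r)) / (2 * eps * r) > 0"
    proof -
      have "0 < sinh r" using r by simp
      then have "0 < 3 * sinh r - sinh (4 * eps * r)" using s2 by linarith
      then have "0 < (3 * sinh r - sinh (4 * eps * r)) / (2 * eps * r)" using d by (rule divide_pos_pos)
      moreover have "1 \<le> cosh r" by (rule cosh_real_ge_1)
      ultimately show ?thesis by linarith
    qed
    show ?thesis using h1 h2 h3 by linarith
  qed
qed

lemma f_nonpos: "lam \<le> 0 \<Longrightarrow> Dminus N 0 eps 0 lam \<noteq> 0"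
  unfolding f_zero_iff using fac_nonpos by fastforce

lemma KK_distinct:
  assumes "0 < x" "x \<le> Mr" "p \<in> II" "q \<in> II" "KK eps (fst p) (snd p) x = 0" "KK eps (fst q) (snd q) x = 0"
  shows "p = q"
proof -
  define S where "S = sin (4 * eps * x)"
  have S: "2 * eps * x < S" using Q_big assms by (simp add: S_def)
  have ex: "0 < eps * x" using eps_pos assms by simp
  have "2 * (fst p - fst q) * (eps * x) + (snd p - snd q) * S = 0"
    using assms(5,6) unfolding KK_def S_def by (simp add: algebra_simps)
  then show ?thesis using assms(3,4) S ex unfolding II_def by (auto simp: algebra_simps)
qed


definition zz :: "real \<times> real \<Rightarrow> nat \<Rightarrow> real" where
  "zz p m = zs (fst p) (snd p) m"

lemma zz_props:
  assumes "p \<in> II" "m \<in> {1..n0}"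
  shows "0 < zz p m" "zz p m \<le> Mr" "zz p m \<in> J m" "KK eps (fst p) (snd p) (zz p m) = 0"
proof -
  have ab: "fst p \<in> {-1,1}" "snd p \<in> {-1,1}" using II_pm[OF assms(1)] by auto
  show "zz p m \<in> J m" "KK eps (fst p) (snd p) (zz p m) = 0"
    using zs_prop(1,2)[OF ab assms(2)] unfolding zz_def by auto
  then show "0 < zz p m" "zz p m \<le> Mr" using J_sub[OF assms(2)] by auto
qed

lemma fac_zero_iff:
  assumes "0 < y"
  shows "fac eps p y = 0 \<longleftrightarrow> KK eps (fst p) (snd p) (sqrt y) = 0"
  using fac_pos_lam[OF assms, of eps p] eps_pos assms by simp

lemma f_zero_pos:
  assumes "0 < y" "sqrt y \<le> Mr"
  shows "Dminus N 0 eps 0 y = 0 \<longleftrightarrow> (\<exists>p\<in>II. \<exists>m\<in>{1..n0}. sqrt y = zz p m)"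
proof -
  have "Dminus N 0 eps 0 y = 0 \<longleftrightarrow> (\<exists>p\<in>II. KK eps (fst p) (snd p) (sqrt y) = 0)"
    unfolding f_zero_iff using fac_zero_iff[OF assms(1)] by simp
  also have "\<dots> \<longleftrightarrow> (\<exists>p\<in>II. \<exists>m\<in>{1..n0}. sqrt y = zz p m)"
    using KK_zero_iff[of _ _ "sqrt y"] II_pm assms unfolding zz_def by auto
  finally show ?thesis .
qed

lemma zero_mult_one:
  assumes p0: "p0 \<in> II" and m: "m \<in> {1..n0}" and y: "y = (zz p0 m)^2"
  shows "zero_mult (Dminus N 0 eps 0) y = 1"
proof -
  define s where "s = zz p0 m"
  have s: "0 < s" "s \<le> Mr" "s \<in> J m" "KK eps (fst p0) (snd p0) s = 0"
    using zz_props[OF p0 m] by (auto simp: s_def)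
  have y0: "0 < y" using y s by (simp add: s_def)
  have sy: "sqrt y = s" using y s by (simp add: s_def)
  define G where "G p l = KK eps (fst p) (snd p) (sqrt l) / (2 * eps * sqrt l)" for p l
  define Gd where "Gd p = (KKd eps (fst p) (snd p) (sqrt y) * (inverse (sqrt y) / 2) * (2 * eps * sqrt y)
      - KK eps (fst p) (snd p) (sqrt y) * (2 * eps * (inverse (sqrt y) / 2))) / ((2 * eps * sqrt y) * (2 * eps * sqrt y))" for p
  have dG: "DERIV (G p) y :> Gd p" for p
  proof -
    have d1: "DERIV (\<lambda>l. KK eps (fst p) (snd p) (sqrt l)) y :> KKd eps (fst p) (snd p) (sqrt y) * (inverse (sqrt y) / 2)"
      by (rule DERIV_chain2[OF KK_deriv DERIV_real_sqrt[OF y0]])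
    have d2: "DERIV (\<lambda>l. 2 * eps * sqrt l) y :> 2 * eps * (inverse (sqrt y) / 2)"
      by (rule DERIV_cmult[OF DERIV_real_sqrt[OF y0]])
    have nz: "2 * eps * sqrt y \<noteq> 0" using eps_pos y0 by simp
    show ?thesis unfolding G_def[abs_def] Gd_def using DERIV_divide[OF d1 d2 nz] by simp
  qed
  have dP: "DERIV (\<lambda>l. \<Prod>p\<in>II. G p l) y :> (\<Sum>p\<in>II. Gd p * (\<Prod>q\<in>II-{p}. G q y))"
    using has_field_derivative_prod[of II G Gd y] dG by (simp add: G_def[abs_def])
  have G0: "G p0 y = 0" unfolding G_def sy using s by simp
  have sum_eq: "(\<Sum>p\<in>II. Gd p * (\<Prod>q\<in>II-{p}. G q y)) = Gd p0 * (\<Prod>q\<in>II-{p0}. G q y)"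
  proof -
    have "(\<Sum>p\<in>II. Gd p * (\<Prod>q\<in>II-{p}. G q y)) = Gd p0 * (\<Prod>q\<in>II-{p0}. G q y)
        + (\<Sum>p\<in>II-{p0}. Gd p * (\<Prod>q\<in>II-{p}. G q y))"
      using sum.remove[OF finite_II p0] by simp
    moreover have "(\<Sum>p\<in>II-{p0}. Gd p * (\<Prod>q\<in>II-{p}. G q y)) = 0"
    proof (rule sum.neutral, rule ballI)
      fix p assume "p \<in> II - {p0}"
      then have "p0 \<in> II - {p}" using p0 by auto
      then have "(\<Prod>q\<in>II-{p}. G q y) = 0" using G0 finite_II by (auto intro: prod_zero)
      then show "Gd p * (\<Prod>q\<in>II-{p}. G q y) = 0" by simp
    qed
    ultimately show ?thesis by simp
  qed
  have Gd0: "Gd p0 \<noteq> 0"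
  proof -
    have "\<bar>s - real m * pi\<bar> \<le> pi/6" using J_sub[OF m s(3)] by simp
    then have "(-1)^m * KKd eps (fst p0) (snd p0) s > 0"
      using KKd_pos[of "fst p0" "snd p0" s m] II_pm[OF p0] s by auto
    then have kd: "KKd eps (fst p0) (snd p0) s \<noteq> 0" by auto
    have "Gd p0 = KKd eps (fst p0) (snd p0) s * (inverse s / 2) * (2 * eps * s) / ((2 * eps * s) * (2 * eps * s))"
      unfolding Gd_def sy using s by simp
    then show ?thesis using kd s eps_pos by simp
  qed
  have Pnz: "(\<Prod>q\<in>II-{p0}. G q y) \<noteq> 0"
  proof -
    have "G q y \<noteq> 0" if q: "q \<in> II - {p0}" for q
    proof
      assume "G q y = 0"
      then have "KK eps (fst q) (snd q) s = 0" unfolding G_def sy using s eps_pos by simp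
      moreover have "q \<in> II" using q by simp
      ultimately have "q = p0" using KK_distinct[OF s(1,2) _ p0 _ s(4)] by blast
      then show False using q by simp
    qed
    then show ?thesis using finite_II by simp
  qed
  have eqf: "Dminus N 0 eps 0 l = (\<Prod>p\<in>II. G p l)" if "l \<in> {0<..}" for l
    unfolding f_prod G_def using fac_pos_lam[of l eps] that eps_pos by simp
  have "DERIV (Dminus N 0 eps 0) y :> Gd p0 * (\<Prod>q\<in>II-{p0}. G q y)"
    using has_field_derivative_transform_within_open[OF dP[unfolded sum_eq], of "{0<..}" "Dminus N 0 eps 0"]
      eqf y0 by auto
  then have dv: "deriv (Dminus N 0 eps 0) y \<noteq> 0"
    using DERIV_imp_deriv Gd0 Pnz by fastforce
  have fy: "Dminus N 0 eps 0 y = 0"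
  proof -
    have "sqrt y \<le> Mr" using sy s by simp
    moreover have "\<exists>p\<in>II. \<exists>m\<in>{1..n0}. sqrt y = zz p m" using sy p0 m unfolding s_def by blast
    ultimately show ?thesis using f_zero_pos[OF y0, of N] by blast
  qed
  show ?thesis unfolding zero_mult_def
  proof (rule Least_equality)
    show "(deriv ^^ 1) (Dminus N 0 eps 0) y \<noteq> 0" using dv by simp
    show "\<And>k. (deriv ^^ k) (Dminus N 0 eps 0) y \<noteq> 0 \<Longrightarrow> 1 \<le> k"
      using fy by (case_tac k) auto
  qed
qed


lemma sgn_cases: "(-1::real)^n = 1 \<or> (-1::real)^n = -1"
  by (cases "even n") auto

lemma J_disj:
  assumes "t \<in> J m" "t \<in> J m'"
  shows "m = m'"
proof (rule ccontr)
  assume ne: "m \<noteq> m'"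
  have a: "real m * pi - pi/6 \<le> t" "t \<le> real m * pi + pi/6"
      "real m' * pi - pi/6 \<le> t" "t \<le> real m' * pi + pi/6" using assms unfolding J_def by auto
  show False
  proof (cases "m < m'")
    case True
    then have "real m + 1 \<le> real m'" by simp
    then have "(real m + 1) * pi \<le> real m' * pi" by (rule mult_right_mono) simp
    then show False using a pi_gt_zero by (simp add: algebra_simps)
  next
    case False
    then have "real m' + 1 \<le> real m" using ne by simp
    then have "(real m' + 1) * pi \<le> real m * pi" by (rule mult_right_mono) simp
    then show False using a pi_gt_zero by (simp add: algebra_simps)
  qed
qed

definition TT :: "real \<Rightarrow> ((real \<times> real) \<times> nat) set" where
  "TT u = {(p,m). p \<in> II \<and> m \<in> {1..n0} \<and> zz p m \<le> u}"

lemma finite_TT: "finite (TT u)"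
proof -
  have "TT u \<subseteq> II \<times> {1..n0}" unfolding TT_def by auto
  then show ?thesis by (rule finite_subset) (simp add: finite_II)
qed

lemma Zl_eq:
  assumes "0 \<le> u" "u \<le> Mr"
  shows "{y. y \<le> u^2 \<and> Dminus N 0 eps 0 y = 0} = (\<lambda>(p,m). (zz p m)^2) ` TT u"
proof (intro equalityI subsetI)
  fix y assume "y \<in> {y. y \<le> u^2 \<and> Dminus N 0 eps 0 y = 0}"
  then have y: "y \<le> u^2" "Dminus N 0 eps 0 y = 0" by auto
  have y0: "0 < y"
  proof (rule ccontr)
    assume "\<not> 0 < y"
    then have "y \<le> 0" by simp
    then show False using f_nonpos y(2) by blast
  qed
  have "sqrt y \<le> sqrt (u^2)" using y by (simp only: real_sqrt_le_iff)
  then have sy: "sqrt y \<le> u" using assms by simp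
  then obtain p m where pm: "p \<in> II" "m \<in> {1..n0}" "sqrt y = zz p m"
    using f_zero_pos[OF y0, of N] y assms by auto
  have "y = (zz p m)^2" using pm(3) y0 by (metis real_sqrt_pow2 less_imp_le)
  moreover have "(p, m) \<in> TT u" unfolding TT_def using pm sy by auto
  ultimately show "y \<in> (\<lambda>(p,m). (zz p m)^2) ` TT u" by force
next
  fix y assume "y \<in> (\<lambda>(p,m). (zz p m)^2) ` TT u"
  then obtain p m where pm: "p \<in> II" "m \<in> {1..n0}" "zz p m \<le> u" "y = (zz p m)^2"
    unfolding TT_def by auto
  note z = zz_props[OF pm(1,2)]
  have y0: "0 < y" using pm z by simp
  have sy: "sqrt y = zz p m" using pm z by simp
  have "y \<le> u^2" using pm z by (simp add: power_mono)
  moreover have "Dminus N 0 eps 0 y = 0"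
  proof -
    have "\<exists>p'\<in>II. \<exists>m'\<in>{1..n0}. sqrt y = zz p' m'" using sy pm(1,2) by blast
    then show ?thesis using f_zero_pos[OF y0, of N] sy z(2) by simp
  qed
  ultimately show "y \<in> {y. y \<le> u^2 \<and> Dminus N 0 eps 0 y = 0}" by simp
qed

lemma inj_TT: "inj_on (\<lambda>(p,m). (zz p m)^2) (TT u)"
proof (rule inj_onI)
  fix x y assume xy: "x \<in> TT u" "y \<in> TT u" "(\<lambda>(p,m). (zz p m)^2) x = (\<lambda>(p,m). (zz p m)^2) y"
  obtain p m where x: "x = (p, m)" by (cases x)
  obtain q m' where y: "y = (q, m')" by (cases y)
  have a: "(p, m) \<in> TT u" "(q, m') \<in> TT u" "(zz p m)^2 = (zz q m')^2" using xy x y by auto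
  have pm: "p \<in> II" "m \<in> {1..n0}" "q \<in> II" "m' \<in> {1..n0}" using a unfolding TT_def by auto
  note z1 = zz_props[OF pm(1,2)] and z2 = zz_props[OF pm(3,4)]
  have e: "zz p m = zz q m'" using a(3) z1(1) z2(1) by (simp add: power2_eq_iff_nonneg)
  have "m = m'" using J_disj[of "zz p m" m m'] z1(3) z2(3) e by simp
  moreover have "p = q" using KK_distinct[OF z1(1,2) pm(1,3) z1(4)] z2(4) e by simp
  ultimately show "x = y" using x y by simp
qed

lemma zc_eq:
  assumes "0 \<le> u" "u \<le> Mr"
  shows "zero_count (Dminus N 0 eps 0) (u^2) = card (TT u)"
proof -
  have "zero_count (Dminus N 0 eps 0) (u^2) = (\<Sum>y\<in>(\<lambda>(p,m). (zz p m)^2) ` TT u. zero_mult (Dminus N 0 eps 0) y)"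
    unfolding zero_count_def Zl_eq[OF assms] ..
  also have "\<dots> = (\<Sum>y\<in>(\<lambda>(p,m). (zz p m)^2) ` TT u. 1)"
  proof (rule sum.cong[OF refl])
    fix y assume "y \<in> (\<lambda>(p,m). (zz p m)^2) ` TT u"
    then obtain p m where "p \<in> II" "m \<in> {1..n0}" "y = (zz p m)^2" unfolding TT_def by auto
    then show "zero_mult (Dminus N 0 eps 0) y = 1" by (rule zero_mult_one)
  qed
  also have "\<dots> = card (TT u)" using card_image[OF inj_TT] by simp
  finally show ?thesis .
qed

lemma zc_nonpos:
  assumes "y \<le> 0"
  shows "zero_count (Dminus N 0 eps 0) y = 0"
proof -
  have "{z. z \<le> y \<and> Dminus N 0 eps 0 z = 0} = {}" using f_nonpos assms by force
  then show ?thesis unfolding zero_count_def by (metis sum.empty)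
qed

lemma TT_mono: "u \<le> v \<Longrightarrow> TT u \<subseteq> TT v"
  unfolding TT_def by auto


lemma TT_top:
  assumes n: "n \<in> {1..n0}"
  shows "TT (real n * pi + pi/6) = II \<times> {1..n}"
proof (intro equalityI subsetI)
  fix x assume x: "x \<in> TT (real n * pi + pi/6)"
  then obtain p m where pm: "x = (p, m)" "p \<in> II" "m \<in> {1..n0}" "zz p m \<le> real n * pi + pi/6"
    unfolding TT_def by auto
  have "m \<le> n"
  proof (rule ccontr)
    assume "\<not> m \<le> n"
    then have "real n + 1 \<le> real m" by simp
    then have "(real n + 1) * pi \<le> real m * pi" by (rule mult_right_mono) simp
    moreover have "real m * pi - pi/6 \<le> zz p m" using zz_props(3)[OF pm(2,3)] unfolding J_def by auto
    ultimately show False using pm(4) pi_gt_zero by (simp add: algebra_simps)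
  qed
  then show "x \<in> II \<times> {1..n}" using pm by auto
next
  fix x assume x: "x \<in> II \<times> {1..n}"
  then obtain p m where pm: "x = (p, m)" "p \<in> II" "m \<in> {1..n}" by auto
  have m: "m \<in> {1..n0}" using pm n by auto
  have "real m * pi \<le> real n * pi" using pm(3) by (intro mult_right_mono) auto
  moreover have "zz p m \<le> real m * pi + pi/6" using zz_props(3)[OF pm(2) m] unfolding J_def by auto
  ultimately have "zz p m \<le> real n * pi + pi/6" by linarith
  then show "x \<in> TT (real n * pi + pi/6)" unfolding TT_def using pm m by auto
qed

lemma PP_zero:
  assumes n: "n \<in> {1..n0}"
  shows "\<exists>mu\<in>J n. PP eps mu = 0"
proof -
  define g where "g t = (-1)^n * PP eps t" for t
  define xl where "xl = real n * pi - pi/6"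
  define xr where "xr = real n * pi + pi/6"
  have xl: "xl \<in> J n" and xr: "xr \<in> J n" unfolding J_def xl_def xr_def by auto
  note l = J_sub[OF n xl] and r = J_sub[OF n xr]
  have sl: "sin xl = (-1)^n * (-1/2)" using sin_npi_add[of n "-(pi/6)"] unfolding xl_def
    by (simp add: sin_30)
  have sr: "sin xr = (-1)^n * (1/2)" using sin_npi_add[of n "pi/6"] unfolding xr_def
    by (simp add: sin_30)
  have bnd: "\<bar>(-1)^n * (2 * eps * t * cos t)\<bar> < 1/2" if "0 < t" "t \<le> Mr" for t
  proof -
    have "\<bar>(-1)^n * (2 * eps * t * cos t)\<bar> = \<bar>2 * eps * t * cos t\<bar>" by (rule abs_sgn_mult)
    also have "\<dots> \<le> 2 * eps * t" using abs_cos_le[of "2 * eps * t" t] eps_pos that by simp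
    also have "\<dots> < 1/2"
    proof -
      have "eps * t \<le> eps * Mr" using that eps_pos by (intro mult_left_mono) auto
      then show ?thesis using epsM by linarith
    qed
    finally show ?thesis .
  qed
  have gl: "g xl \<le> 0"
  proof -
    have "g xl = -1/2 + (-1)^n * (2 * eps * xl * cos xl)"
      unfolding g_def PP_def sl by (simp add: algebra_simps sgn_sq)
    then show ?thesis using bnd[OF l(1,2)] by linarith
  qed
  have gr: "0 \<le> g xr"
  proof -
    have "g xr = 1/2 + (-1)^n * (2 * eps * xr * cos xr)"
      unfolding g_def PP_def sr by (simp add: algebra_simps sgn_sq)
    then show ?thesis using bnd[OF r(1,2)] by linarith
  qed
  have cg: "continuous_on {xl..xr} g" unfolding g_def PP_def by (intro continuous_intros)
  have "xl \<le> xr" unfolding xl_def xr_def by simp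
  then obtain mu where mu: "xl \<le> mu" "mu \<le> xr" "g mu = 0" using IVT'[OF gl gr _ cg] by blast
  then have "mu \<in> J n" unfolding J_def xl_def xr_def by auto
  moreover have "PP eps mu = 0" using mu(3) unfolding g_def by simp
  ultimately show ?thesis by blast
qed

lemma KK_PP0:
  assumes "PP eps mu = 0"
  shows "KK eps a b mu = 2 * a * eps * mu + b * sin (4 * eps * mu)"
proof -
  have "KK eps a b mu = 3 * PP eps mu + 2 * a * eps * mu + b * sin (4 * eps * mu)"
    unfolding KK_def PP_def by (simp add: algebra_simps)
  then show ?thesis using assms by simp
qed

lemma KK_mid_sign:
  assumes "p \<in> II" "0 < mu" "mu \<le> Mr" "PP eps mu = 0"
  shows "0 \<le> (-1)^n * KK eps (fst p) (snd p) mu \<longleftrightarrow> snd p = (-1)^n"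
    and "KK eps (fst p) (snd p) mu \<noteq> 0"
proof -
  define S where "S = sin (4 * eps * mu)"
  have S: "2 * eps * mu < S" using Q_big assms by (simp add: S_def)
  have e: "0 < eps * mu" using eps_pos assms by simp
  have K: "KK eps (fst p) (snd p) mu = 2 * fst p * (eps * mu) + snd p * S"
    using KK_PP0[OF assms(4)] unfolding S_def by simp
  have ab: "fst p \<in> {-1,1}" "snd p \<in> {-1,1}" using II_pm[OF assms(1)] by auto
  show "0 \<le> (-1)^n * KK eps (fst p) (snd p) mu \<longleftrightarrow> snd p = (-1)^n"
    unfolding K using sgn_cases[of n] ab S e by (auto simp: algebra_simps)
  show "KK eps (fst p) (snd p) mu \<noteq> 0"
    unfolding K using ab S e by (auto simp: algebra_simps)
qed

lemma TT_mid:
  assumes n: "n \<in> {1..n0}" and mu: "mu \<in> J n" "PP eps mu = 0"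
  shows "TT mu = II \<times> {1..n-1} \<union> {p\<in>II. snd p = (-1)^n} \<times> {n}"
proof -
  note mJ = J_sub[OF n mu(1)]
  have key: "zz p m \<le> mu \<longleftrightarrow> (m < n \<or> (m = n \<and> snd p = (-1)^n))"
    if p: "p \<in> II" and m: "m \<in> {1..n0}" for p m
  proof (cases "m = n")
    case True
    have "zz p n \<le> mu \<longleftrightarrow> 0 \<le> (-1)^n * KK eps (fst p) (snd p) mu"
      using zs_prop(4)[of "fst p" "snd p" n mu] II_pm[OF p] n mu(1) unfolding zz_def by auto
    then show ?thesis using KK_mid_sign(1)[OF p mJ(1,2) mu(2)] True by simp
  next
    case False
    have z: "real m * pi - pi/6 \<le> zz p m" "zz p m \<le> real m * pi + pi/6"
      using zz_props(3)[OF p m] unfolding J_def by auto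
    have u: "real n * pi - pi/6 \<le> mu" "mu \<le> real n * pi + pi/6" using mu(1) unfolding J_def by auto
    show ?thesis
    proof (cases "m < n")
      case True
      then have "real m + 1 \<le> real n" by simp
      then have "(real m + 1) * pi \<le> real n * pi" by (rule mult_right_mono) simp
      then have "zz p m \<le> mu" using z u pi_gt_zero by (simp add: algebra_simps)
      then show ?thesis using True by simp
    next
      case False2: False
      then have "real n + 1 \<le> real m" using False by simp
      then have "(real n + 1) * pi \<le> real m * pi" by (rule mult_right_mono) simp
      then have "real n * pi + pi \<le> real m * pi" by (simp add: algebra_simps)
      then have "\<not> zz p m \<le> mu" using z u pi_gt_zero by linarith
      then show ?thesis using False False2 by simp
    qed
  qed
  show ?thesis
  proof (intro equalityI subsetI)
    fix x assume "x \<in> TT mu"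
    then obtain p m where pm: "x = (p,m)" "p \<in> II" "m \<in> {1..n0}" "zz p m \<le> mu" unfolding TT_def by auto
    then show "x \<in> II \<times> {1..n-1} \<union> {p\<in>II. snd p = (-1)^n} \<times> {n}" using key[OF pm(2,3)] by auto
  next
    fix x assume x: "x \<in> II \<times> {1..n-1} \<union> {p\<in>II. snd p = (-1)^n} \<times> {n}"
    obtain p m where xpm: "x = (p,m)" by (cases x)
    have pm: "p \<in> II" "m < n \<or> (m = n \<and> snd p = (-1)^n)" "1 \<le> m"
      using x n unfolding xpm by auto
    have m: "m \<in> {1..n0}" using pm n by auto
    show "x \<in> TT mu" unfolding TT_def xpm using key[OF pm(1) m] pm m by auto
  qed
qed

lemma card_mid:
  assumes "n \<ge> 1"
  shows "card (II \<times> {1..n-1} \<union> {p\<in>II. snd p = (-1)^n} \<times> {n}) = 4 * n - 2"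
proof -
  have e: "{p\<in>II. snd p = (-1)^n} = {(-1, (-1)^n), (1, (-1)^n)}"
    using sgn_cases[of n] unfolding II_def by auto
  have c2: "card {p\<in>II. snd p = (-1)^n} = 2" unfolding e by simp
  have "card (II \<times> {1..n-1} \<union> {p\<in>II. snd p = (-1)^n} \<times> {n})
      = card (II \<times> {1..n-1}) + card ({p\<in>II. snd p = (-1)^n} \<times> {n})"
    by (rule card_Un_disjoint) (auto simp: finite_II)
  also have "\<dots> = 4 * (n - 1) + 2" using c2 card_II by (simp add: card_cartesian_product)
  finally show ?thesis using assms by simp
qed


lemma Fm_ge1:
  assumes "0 \<le> lam" "sqrt lam \<le> Mr"
  shows "1 \<le> \<bar>Fm eps lam\<bar>"
proof (cases "lam = 0")
  case True then show ?thesis using Fpm_zero[of eps] eps_pos by simp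
next
  case False
  then have l: "0 < lam" using assms by simp
  have e: "eps \<noteq> 0" using eps_pos by simp
  have s: "0 < sqrt lam" using l by simp
  have d: "0 < 2 * eps * sqrt lam" using s eps_pos by simp
  have "2 * eps * sqrt lam < sin (4 * eps * sqrt lam)" using Q_big[OF s assms(2)] .
  then have "1 < sin (4 * eps * sqrt lam) / (2 * eps * sqrt lam)" using d by simp
  then show ?thesis unfolding Fpm_pos(2)[OF l e]
    using abs_ge_self[of "sin (4 * eps * sqrt lam) / (2 * eps * sqrt lam)"] by linarith
qed

lemma gap_main:
  assumes n: "n \<in> {1..n0}" and N: "1 \<le> N"
  shows "gap N a eps n = gap N 0 eps n \<and> gap N 0 eps n \<noteq> {}"
proof -
  define f where "f = Dminus N 0 eps 0"
  define S where "S j = {x. j \<le> zero_count f x}" for j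
  have n1: "1 \<le> n" using n by simp
  define uY where "uY = real n * pi + pi/6"
  have uY: "0 \<le> uY" "uY \<le> Mr" using J_sub[OF n, of uY] unfolding uY_def J_def by auto
  define Y where "Y = uY^2"
  have "zero_count f Y = card (TT uY)" unfolding f_def Y_def by (rule zc_eq[OF uY])
  also have "TT uY = II \<times> {1..n}" unfolding uY_def by (rule TT_top[OF n])
  finally have zcY: "zero_count f Y = 4 * n" using card_II
    by (simp add: card_cartesian_product)
  obtain mu where mu: "mu \<in> J n" "PP eps mu = 0" using PP_zero[OF n] by blast
  note mJ = J_sub[OF n mu(1)]
  define x where "x = mu^2"
  have TTx: "card (TT mu) = 4 * n - 2" using TT_mid[OF n mu] card_mid[OF n1] by simp
  have zcx: "zero_count f x = 4 * n - 2"
    unfolding f_def x_def zc_eq[OF less_imp_le[OF mJ(1)] mJ(2)] TTx ..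
  have muY: "mu \<le> uY" using mu(1) unfolding J_def uY_def by auto
  have xY: "x \<le> Y" unfolding x_def Y_def using muY mJ(1) by (simp add: power_mono)
  have pos: "0 < y" if "y \<in> S j" "1 \<le> j" for y j
  proof (rule ccontr)
    assume "\<not> 0 < y"
    then have "zero_count f y = 0" unfolding f_def by (intro zc_nonpos) simp
    then show False using that unfolding S_def by simp
  qed
  have bdd: "bdd_below (S j)" if "1 \<le> j" for j
    using pos[OF _ that] by (intro bdd_belowI[of _ 0]) (auto intro: less_imp_le)
  have zc_le: "zero_count f y \<le> 4 * n - 2" if "y \<le> x" for y
  proof (cases "y \<le> 0")
    case True then show ?thesis unfolding f_def using zc_nonpos by simp
  next
    case False
    define v where "v = sqrt y"
    have v1: "0 \<le> v" unfolding v_def using False by simp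
    have "sqrt y \<le> sqrt (mu^2)" using that unfolding x_def by (rule real_sqrt_le_mono)
    then have v2: "v \<le> mu" unfolding v_def using mJ(1) by simp
    have v3: "y = v^2" unfolding v_def using False by simp
    note v = v1 v2 v3
    have "zero_count f y = card (TT v)" unfolding f_def v(3) using zc_eq[of v] v mJ by simp
    also have "\<dots> \<le> card (TT mu)" by (rule card_mono[OF finite_TT TT_mono[OF v(2)]])
    finally show ?thesis using TTx by simp
  qed
  have j1: "1 \<le> 4 * n - 1" using n1 by simp
  have YS: "Y \<in> S (4 * n - 1)" unfolding S_def using zcY by simp
  have lp_le: "lam_plus N eps n \<le> Y"
    unfolding lam_plus_def kth_zero_def f_def[symmetric] S_def[symmetric]
    by (rule cInf_lower[OF YS bdd[OF j1]])
  have lp_ge: "x \<le> lam_plus N eps n"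
    unfolding lam_plus_def kth_zero_def f_def[symmetric] S_def[symmetric]
  proof (rule cInf_greatest)
    show "S (4 * n - 1) \<noteq> {}" using YS by blast
    fix y assume y: "y \<in> S (4 * n - 1)"
    show "x \<le> y"
    proof (rule ccontr)
      assume "\<not> x \<le> y"
      then have "zero_count f y \<le> 4 * n - 2" using zc_le by simp
      then show False using y n1 unfolding S_def by simp
    qed
  qed
  define Zx where "Zx = {y. y \<le> x \<and> f y = 0}"
  have Zx_img: "Zx = (\<lambda>(p,m). (zz p m)^2) ` TT mu"
    unfolding Zx_def f_def x_def by (rule Zl_eq[OF less_imp_le[OF mJ(1)] mJ(2)])
  have finZ: "finite Zx" unfolding Zx_img using finite_TT by simp
  have "card Zx = 4 * n - 2" unfolding Zx_img using card_image[OF inj_TT] TTx by simp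
  then have neZ: "Zx \<noteq> {}" using n1 by auto
  define zm where "zm = Max Zx"
  have zmZ: "zm \<in> Zx" unfolding zm_def using Max_in[OF finZ neZ] .
  have zm_lt: "zm < x"
  proof -
    obtain p m where pm: "(p,m) \<in> TT mu" "zm = (zz p m)^2" using zmZ unfolding Zx_img by auto
    have pm2: "p \<in> II" "m \<in> {1..n0}" "zz p m \<le> mu" using pm(1) unfolding TT_def by auto
    have "zz p m \<noteq> mu"
      using zz_props(4)[OF pm2(1,2)] KK_mid_sign(2)[OF pm2(1) mJ(1,2) mu(2)] by auto
    then have "zz p m < mu" using pm2(3) by simp
    then show ?thesis unfolding pm(2) x_def using zz_props(1)[OF pm2(1,2)] by (simp add: power_strict_mono)
  qed
  have zc_zm: "zero_count f zm = zero_count f x"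
  proof -
    have "{y. y \<le> zm \<and> f y = 0} = Zx"
    proof (intro equalityI subsetI)
      fix y assume "y \<in> {y. y \<le> zm \<and> f y = 0}"
      then show "y \<in> Zx" using zm_lt unfolding Zx_def by auto
    next
      fix y assume "y \<in> Zx"
      then show "y \<in> {y. y \<le> zm \<and> f y = 0}" using Max_ge[OF finZ] unfolding zm_def Zx_def by auto
    qed
    then show ?thesis unfolding zero_count_def Zx_def by simp
  qed
  have j2: "1 \<le> 4 * n - 2" using n1 by simp
  have zmS: "zm \<in> S (4 * n - 2)" unfolding S_def using zc_zm zcx by simp
  have lm_le: "lam_minus N eps n \<le> zm"
    unfolding lam_minus_def kth_zero_def f_def[symmetric] S_def[symmetric]
    by (rule cInf_lower[OF zmS bdd[OF j2]])
  have lm_ge: "0 \<le> lam_minus N eps n"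
    unfolding lam_minus_def kth_zero_def f_def[symmetric] S_def[symmetric]
  proof (rule cInf_greatest)
    show "S (4 * n - 2) \<noteq> {}" using zmS by blast
    fix y assume "y \<in> S (4 * n - 2)"
    then show "0 \<le> y" using pos[OF _ j2] by (auto intro: less_imp_le)
  qed
  have lt: "lam_minus N eps n < lam_plus N eps n" using lm_le zm_lt lp_ge by linarith
  have vk_nn: "0 \<le> vk N a' eps k l" if "0 \<le> l" "l \<le> Y" for a' k l
  proof -
    have "sqrt l \<le> sqrt Y" using that by (simp only: real_sqrt_le_iff)
    then have "sqrt l \<le> Mr" using uY unfolding Y_def by simp
    then have "1 \<le> \<bar>Fm eps l\<bar>" using Fm_ge1 that by simp
    moreover have "(ck N a' k)^2 \<le> 1"
    proof -
      define t where "t = pi * real k / real N + a'"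
      have "(sin t)^2 + (cos t)^2 = 1" "0 \<le> (sin t)^2" by simp_all
      then show ?thesis unfolding ck_def t_def[symmetric] by linarith
    qed
    ultimately show ?thesis unfolding vk_def by simp
  qed
  have lmY: "lam_minus N eps n \<le> Y" using lm_le zm_lt xY by linarith
  have lpY0: "0 \<le> lam_plus N eps n" using lm_ge lt by linarith
  have Em: "E_minus N a' eps k n = lam_minus N eps n" for a' k
    unfolding E_minus_def using vk_nn[OF lm_ge lmY] by simp
  have Ep: "E_plus N a' eps k n = lam_plus N eps n" for a' k
    unfolding E_plus_def using vk_nn[OF lpY0 lp_le] by simp
  have g: "gap N a' eps n = {lam_minus N eps n <..< lam_plus N eps n}" for a'
  proof -
    have ne: "{0..<N} \<noteq> {}" using N by auto
    show ?thesis unfolding gap_def Em Ep using ne by simp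
  qed
  have "(lam_minus N eps n + lam_plus N eps n) / 2 \<in> gap N 0 eps n" unfolding g using lt by simp
  then show ?thesis using g by blast
qed

end

theorem proposition3p5:
  fixes N :: nat
  assumes "N \<ge> 1"
  shows "\<forall>n0::nat. \<exists>eps0>0. \<forall>a::real. \<forall>eps::real. \<forall>n::nat.
           0 < eps \<and> eps < eps0 \<and> 1 \<le> n \<and> n \<le> n0 \<longrightarrow>
             gap N a eps n = gap N 0 eps n \<and> gap N 0 eps n \<noteq> {}"
proof (intro allI)
  fix n0 :: nat
  define e0 where "e0 = 1 / (32 * (real n0 + 1))"
  have e0: "0 < e0" unfolding e0_def by simp
  have main: "\<forall>a::real. \<forall>eps::real. \<forall>n::nat.
           0 < eps \<and> eps < e0 \<and> 1 \<le> n \<and> n \<le> n0 \<longrightarrow>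
             gap N a eps n = gap N 0 eps n \<and> gap N 0 eps n \<noteq> {}"
  proof (intro allI impI)
    fix a eps :: real and n :: nat
    assume h: "0 < eps \<and> eps < e0 \<and> 1 \<le> n \<and> n \<le> n0"
    have pos: "0 < 32 * (real n0 + 1)" by simp
    have "eps * (32 * (real n0 + 1)) < e0 * (32 * (real n0 + 1))"
      using h pos by (intro mult_strict_right_mono) auto
    then have small: "eps * (32 * (real n0 + 1)) < 1" unfolding e0_def using pos by simp
    interpret setting n0 eps using h small by unfold_locales auto
    show "gap N a eps n = gap N 0 eps n \<and> gap N 0 eps n \<noteq> {}"
      using gap_main[of n N a] h assms by auto
  qed
  then show "\<exists>eps0>0. \<forall>a::real. \<forall>eps::real. \<forall>n::nat.
           0 < eps \<and> eps < eps0 \<and> 1 \<le> n \<and> n \<le> n0 \<longrightarrow>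
             gap N a eps n = gap N 0 eps n \<and> gap N 0 eps n \<noteq> {}"
    using e0 by blast
qed

end
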